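(* Let $G$ be a simple graph on $n$ vertices and $1\le k<n$ an integer such that $F_k(G)$ is regular. Then $F_k(\overline{G})$ is also regular, where $\overline{G}$ is the complement of $G$.
   Context: For a simple graph $G=(V,E)$ on $n$ vertices and an integer $1\le k<n$, the $k$-token graph $F_k(G)$ is the graph whose vertices are all $k$-element subsets of $V$, two such subsets $A,B$ being adjacent whenever their symmetric difference $A\triangle B$ is a pair $\{a,b\}$ with $a$ adjacent to $b$ in $G$. *)

theory Defs
  imports Main
begin

definition simple_graph :: "'a set \<Rightarrow> ('a \<Rightarrow> 'a \<Rightarrow> bool) \<Rightarrow> bool" where
  "simple_graph V E \<longleftrightarrow> finite V \<and> (\<forall>a b. E a b \<longrightarrow> a \<in> V \<and> b \<in> V)
     \<and> (\<forall>a b. E a b \<longrightarrow> E b a) \<and> (\<forall>a. \<not> E a a)"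

definition complement :: "'a set \<Rightarrow> ('a \<Rightarrow> 'a \<Rightarrow> bool) \<Rightarrow> 'a \<Rightarrow> 'a \<Rightarrow> bool" where
  "complement V E a b \<longleftrightarrow> a \<in> V \<and> b \<in> V \<and> a \<noteq> b \<and> \<not> E a b"

definition token_vertices :: "'a set \<Rightarrow> nat \<Rightarrow> 'a set set" where
  "token_vertices V k = {A. A \<subseteq> V \<and> card A = k}"

definition token_adj :: "('a \<Rightarrow> 'a \<Rightarrow> bool) \<Rightarrow> 'a set \<Rightarrow> 'a set \<Rightarrow> bool" where
  "token_adj E A B \<longleftrightarrow> (\<exists>a b. (A - B) \<union> (B - A) = {a, b} \<and> E a b)"

definition token_degree :: "'a set \<Rightarrow> ('a \<Rightarrow> 'a \<Rightarrow> bool) \<Rightarrow> nat \<Rightarrow> 'a set \<Rightarrow> nat" where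
  "token_degree V E k A = card {B \<in> token_vertices V k. token_adj E A B}"

definition token_graph_regular :: "'a set \<Rightarrow> ('a \<Rightarrow> 'a \<Rightarrow> bool) \<Rightarrow> nat \<Rightarrow> bool" where
  "token_graph_regular V E k \<longleftrightarrow>
     (\<exists>d. \<forall>A \<in> token_vertices V k. token_degree V E k A = d)"

end

theory Submission
  imports Defs
begin

lemma complement_simple:
  assumes "simple_graph V E" shows "simple_graph V (complement V E)"
  using assms unfolding simple_graph_def complement_def by auto

lemma degree_pairs:
  assumes sg: "simple_graph V E" and AV: "A \<subseteq> V" and cA: "card A = k"
  shows "token_degree V E k A = card {p \<in> A \<times> (V - A). E (fst p) (snd p)}"
proof -
  have fV: "finite V" using sg by (simp add: simple_graph_def)
  have fA: "finite A" using AV fV finite_subset by blast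
  have sym: "\<And>a b. E a b \<Longrightarrow> E b a" and irr: "\<And>a. \<not> E a a"
    and inV: "\<And>a b. E a b \<Longrightarrow> a \<in> V \<and> b \<in> V" using sg by (auto simp: simple_graph_def)
  define P where "P = {p \<in> A \<times> (V - A). E (fst p) (snd p)}"
  define N where "N = {B \<in> token_vertices V k. token_adj E A B}"
  define f where "f = (\<lambda>(a,b). insert b (A - {a}))"
  have key: "A - f (a,b) = {a} \<and> f (a,b) - A = {b}" if "a \<in> A" "b \<notin> A" for a b
    using that by (auto simp: f_def)
  have "bij_betw f P N"
  proof (rule bij_betwI')
    fix p q assume "p \<in> P" "q \<in> P"
    then obtain a b a' b' where p: "p = (a,b)" "a \<in> A" "b \<notin> A" and q: "q = (a',b')" "a' \<in> A" "b' \<notin> A"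
      by (auto simp: P_def)
    show "(f p = f q) = (p = q)"
    proof
      assume "f p = f q"
      then have "A - f (a,b) = A - f (a',b')" "f (a,b) - A = f (a',b') - A" using p q by simp_all
      then have "{a} = {a'}" "{b} = {b'}" using key[of a b] key[of a' b'] p q by simp_all
      then show "p = q" using p q by simp
    qed simp
  next
    fix p assume "p \<in> P"
    then obtain a b where p: "p = (a,b)" "a \<in> A" "b \<in> V" "b \<notin> A" "E a b"
      by (auto simp: P_def)
    have "card (A - {a}) = k - 1" using fA p cA by simp
    moreover have "k \<ge> 1" proof -
      have "A \<noteq> {}" using p by auto
      then have "card A > 0" using fA by (simp add: card_gt_0_iff)
      then show ?thesis using cA by simp
    qed
    moreover have "f p = insert b (A - {a})" using p by (simp add: f_def)
    moreover have "b \<notin> A - {a}" using p by simp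
    moreover have "finite (A - {a})" using fA by simp
    ultimately have "card (f p) = k" by simp
    moreover have "f p \<subseteq> V" using p AV by (auto simp: f_def)
    moreover have "token_adj E A (f p)"
    proof -
      have "(A - f p) \<union> (f p - A) = {a, b}" using key[of a b] p by auto
      then show ?thesis unfolding token_adj_def using p by blast
    qed
    ultimately have "f p \<in> token_vertices V k \<and> token_adj E A (f p)"
      unfolding token_vertices_def by blast
    then show "f p \<in> N" unfolding N_def by blast
  next
    fix B assume "B \<in> N"
    then have BT: "B \<in> token_vertices V k" and adj: "token_adj E A B"
      unfolding N_def by blast+
    from BT have BV: "B \<subseteq> V" and cB: "card B = k" unfolding token_vertices_def by blast+
    have fB: "finite B" using BV fV finite_subset by blast
    from adj obtain x y where xy: "(A - B) \<union> (B - A) = {x, y}" "E x y" unfolding token_adj_def by blast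
    have xny: "x \<noteq> y" using irr xy(2) by auto
    have c1: "card (A - B) = card (B - A)"
      using cA cB fA fB by (simp add: card_Diff_subset_Int Int_commute)
    have c2: "card (A - B) + card (B - A) = 2"
    proof -
      have "card ((A - B) \<union> (B - A)) = card (A - B) + card (B - A)"
        using fA fB by (intro card_Un_disjoint) auto
      moreover have "card ((A - B) \<union> (B - A)) = 2" using xy(1) xny by simp
      ultimately show ?thesis by simp
    qed
    have "card (A - B) = 1" "card (B - A) = 1" using c1 c2 by auto
    then obtain a b where ab: "A - B = {a}" "B - A = {b}" by (metis One_nat_def card_1_singleton_iff)
    have "{a,b} = {x,y}" using ab xy(1) by auto
    then have "(a = x \<and> b = y) \<or> (a = y \<and> b = x)" by (simp add: doubleton_eq_iff)
    then have Eab: "E a b" using xy(2) sym by blast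
    have "B = insert b (A - {a})" using ab by blast
    moreover have "(a,b) \<in> P" using ab Eab inV by (auto simp: P_def)
    ultimately show "\<exists>p\<in>P. B = f p" by (intro bexI[of _ "(a,b)"]) (simp_all add: f_def)
  qed
  then have "card P = card N" by (rule bij_betw_same_card)
  then show ?thesis unfolding token_degree_def N_def P_def by simp
qed

theorem corollary1:
  fixes V :: "'a set" and E :: "'a \<Rightarrow> 'a \<Rightarrow> bool" and k :: nat
  assumes "simple_graph V E"
    and "1 \<le> k" and "k < card V"
    and "token_graph_regular V E k"
  shows "token_graph_regular V (complement V E) k"
proof -
  obtain d where d: "\<forall>A \<in> token_vertices V k. token_degree V E k A = d"
    using assms(4) token_graph_regular_def by blast
  have fV: "finite V" using assms(1) by (simp add: simple_graph_def)
  have "token_degree V (complement V E) k A = k * (card V - k) - d" if A: "A \<in> token_vertices V k" for A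
  proof -
    have AV: "A \<subseteq> V" and cA: "card A = k" using A by (auto simp: token_vertices_def)
    have fA: "finite A" using AV fV finite_subset by blast
    let ?S = "A \<times> (V - A)"
    have fS: "finite ?S" using fA fV by simp
    have eq: "{p \<in> ?S. complement V E (fst p) (snd p)} = {p \<in> ?S. \<not> E (fst p) (snd p)}"
      using AV by (auto simp: complement_def)
    have "card {p \<in> ?S. E (fst p) (snd p)} + card {p \<in> ?S. \<not> E (fst p) (snd p)} = card ?S"
    proof -
      have "{p \<in> ?S. E (fst p) (snd p)} \<union> {p \<in> ?S. \<not> E (fst p) (snd p)} = ?S" by blast
      moreover have "{p \<in> ?S. E (fst p) (snd p)} \<inter> {p \<in> ?S. \<not> E (fst p) (snd p)} = {}" by blast
      ultimately show ?thesis using fS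
        by (metis (no_types, lifting) card_Un_disjoint finite_Un)
    qed
    moreover have "card ?S = k * (card V - k)" using cA AV fA fV by (simp add: card_cartesian_product card_Diff_subset)
    moreover have "card {p \<in> ?S. E (fst p) (snd p)} = d"
      using degree_pairs[OF assms(1) AV cA] d A by simp
    ultimately show ?thesis
      using degree_pairs[OF complement_simple[OF assms(1)] AV cA] eq by simp
  qed
  then show ?thesis unfolding token_graph_regular_def by blast
qed

end
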